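(* Let $C_m=\frac{1}{m+1}\binom{2m}{m}$ denote the $m$-th Catalan number. For every integer $n\ge 2$, \[\sum_{i=1}^{n-1} 2^{2i-1}C_{i-1}C_{2n-1-2i}=4^{n-1}C_{n-1}-C_{2n-2}.\] *)

theory Defs
  imports Main
begin

text \<open>The m-th Catalan number C_m = binom(2m,m)/(m+1); the division is exact.\<close>
definition catalan :: "nat \<Rightarrow> nat" where
  "catalan m = ((2 * m) choose m) div (m + 1)"

end

theory Submission imports Defs "HOL-Computational_Algebra.Formal_Power_Series" begin
lemma b1: "(m+1) * ((2*m) choose (m+1)) = m * ((2*m) choose m)"
proof (cases m)
  case 0 then show ?thesis by simp
next
  case (Suc k)
  have h: "Suc m * (Suc (m + k) choose Suc m) = Suc k * (Suc (m + k) choose m)"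
    by (rule Suc_times_binomial_add)
  have "Suc (m+k) = 2*m" using Suc by simp
  with h Suc show ?thesis by (simp only: Suc_eq_plus1)
qed
lemma b2: "(m+1)*(m+1) * ((2*m+2) choose (m+1)) = (2*m+2)*(2*m+1)*((2*m) choose m)"
proof -
  have e1: "Suc m * (Suc (2*m+1) choose Suc m) = Suc (2*m+1) * ((2*m+1) choose m)"
    by (rule Suc_times_binomial)
  have e2: "Suc m * (Suc (2*m) choose Suc m) = Suc (2*m) * ((2*m) choose m)"
    by (rule Suc_times_binomial)
  have e3: "((2*m+1) choose m) = ((2*m+1) choose (m+1))"
    using binomial_symmetric[of m "2*m+1"] by (simp del: binomial_Suc_Suc)
  have e1': "(m+1) * ((2*m+2) choose (m+1)) = (2*m+2) * ((2*m+1) choose (m+1))"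
    using e1 e3 by (simp only: Suc_eq_plus1 add.assoc one_add_one)
  have e2': "(m+1) * ((2*m+1) choose (m+1)) = (2*m+1) * ((2*m) choose m)"
    using e2 by (simp only: Suc_eq_plus1)
  have "(m+1)*(m+1) * ((2*m+2) choose (m+1)) = (m+1) * ((m+1) * ((2*m+2) choose (m+1)))"
    by (simp only: mult.assoc)
  also have "\<dots> = (2*m+2) * ((m+1) * ((2*m+1) choose (m+1)))" unfolding e1' by (simp only: mult.left_commute)
  also have "\<dots> = (2*m+2)*(2*m+1)*((2*m) choose m)" unfolding e2' by (simp only: mult.assoc)
  finally show ?thesis .
qed
lemma cat_mul: "(m+1) * catalan m = (2*m) choose m"
proof -
  have "(2*m) choose m = (m+1) * (((2*m) choose m) - ((2*m) choose (m+1)))"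
    using b1[of m] by (simp add: algebra_simps diff_mult_distrib2 del: binomial_Suc_Suc)
  then have "(m+1) dvd ((2*m) choose m)" by (metis dvd_triv_left)
  then show ?thesis unfolding catalan_def by (rule dvd_mult_div_cancel)
qed
lemma cat_rec: "(m+2) * catalan (m+1) = (4*m+2) * catalan m"
proof -
  have A: "(m+2) * catalan (m+1) = (2*m+2) choose (m+1)" using cat_mul[of "m+1"]
    by (simp only: mult_2 add_ac) (simp add: add_ac numeral_2_eq_2 del: binomial_Suc_Suc)
  have "(m+1) * ((m+1) * ((2*m+2) choose (m+1))) = (m+1) * (2*(2*m+1)*((2*m) choose m))"
    using b2[of m] by (simp only: mult.assoc mult.left_commute) (simp add: algebra_simps del: binomial_Suc_Suc)
  moreover have ne: "(m+1::nat) \<noteq> 0" by simp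
  ultimately have B: "(m+1) * ((2*m+2) choose (m+1)) = 2*(2*m+1)*((2*m) choose m)"
    by (metis mult_left_cancel)
  have "(m+1) * ((m+2) * catalan (m+1)) = 2*(2*m+1)*((2*m) choose m)"
    unfolding A by (rule B)
  also have "\<dots> = 2*(2*m+1)*((m+1) * catalan m)" unfolding cat_mul ..
  also have "\<dots> = (m+1) * ((4*m+2) * catalan m)" by (simp add: algebra_simps)
  finally show ?thesis by (subst (asm) mult_left_cancel) simp_all
qed

definition cf :: "int fps" where "cf = Abs_fps (\<lambda>n. int (catalan n))"

lemma cf_nth: "fps_nth cf n = int (catalan n)" by (simp add: cf_def)

lemma cf_rec: "(int k + 2) * fps_nth cf (k+1) = (4 * int k + 2) * fps_nth cf k"
proof -
  have "int ((k+2) * catalan (k+1)) = int ((4*k+2) * catalan k)" using cat_rec by simp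
  then show ?thesis by (simp add: cf_nth algebra_simps)
qed

lemma cat0: "catalan 0 = 1" by (simp add: catalan_def)

lemma cf_ode: "fps_X * (fps_deriv cf) - fps_const 4 * (fps_X * (fps_X * fps_deriv cf)) = 1 - cf + fps_const 2 * (fps_X * cf)"
proof (rule fps_ext)
  fix n
  show "fps_nth (fps_X * (fps_deriv cf) - fps_const 4 * (fps_X * (fps_X * fps_deriv cf))) n = fps_nth (1 - cf + fps_const 2 * (fps_X * cf)) n"
  proof (cases n)
    case 0 then show ?thesis by (simp add: cf_nth cat0)
  next
    case (Suc k)
    have r: "(int k + 2) * fps_nth cf (k+1) = (4 * int k + 2) * fps_nth cf k" by (rule cf_rec)
    show ?thesis using r by (cases k) (auto simp: Suc algebra_simps)
  qed
qed

definition gf :: "int fps" where "gf = 1 + fps_X * (cf * cf) - cf"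

lemma gf_ode: "fps_X * fps_deriv gf - fps_const 4 * (fps_X * (fps_X * fps_deriv gf)) = - gf"
proof -
  define D where "D = fps_deriv cf"
  have ode: "fps_X * D - fps_const 4 * (fps_X * (fps_X * D)) = 1 - cf + fps_const 2 * (fps_X * cf)"
    using cf_ode unfolding D_def .
  have dg: "fps_deriv gf = cf * cf + fps_X * (D * cf + cf * D) - D"
    unfolding gf_def D_def by (simp add: algebra_simps)
  have "fps_X * fps_deriv gf - fps_const 4 * (fps_X * (fps_X * fps_deriv gf))
     = (fps_X - fps_const 4 * fps_X * fps_X) * (cf * cf)
       + (fps_const 2 * fps_X * cf - 1) * (fps_X * D - fps_const 4 * (fps_X * (fps_X * D)))"
    unfolding dg by (simp add: algebra_simps flip: numeral_fps_const)
  also have "\<dots> = (fps_X - fps_const 4 * fps_X * fps_X) * (cf * cf)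
       + (fps_const 2 * fps_X * cf - 1) * (1 - cf + fps_const 2 * (fps_X * cf))"
    unfolding ode ..
  also have "\<dots> = - gf"
    unfolding gf_def by (simp add: algebra_simps flip: numeral_fps_const)
  finally show ?thesis .
qed

lemma gf_zero: "gf = 0"
proof -
  have c: "fps_nth gf (Suc k) * (int k + 2) = 4 * int k * fps_nth gf k" for k
  proof -
    have "fps_nth (fps_X * fps_deriv gf - fps_const 4 * (fps_X * (fps_X * fps_deriv gf))) (Suc k) = fps_nth (- gf) (Suc k)"
      using gf_ode by simp
    then show ?thesis by (cases k) (auto simp: algebra_simps)
  qed
  have "fps_nth gf n = 0" for n
  proof (induction n)
    case 0 then show ?case by (simp add: gf_def cf_nth cat0)
  next
    case (Suc n) then show ?case using c[of n] by simp
  qed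
  then show ?thesis by (simp add: fps_ext)
qed

lemma cf_eq: "cf = 1 + fps_X * (cf * cf)"
  using gf_zero unfolding gf_def by (simp add: algebra_simps)

definition sq :: "int fps \<Rightarrow> int fps" where "sq f = f oo (fps_X ^ 2)"

lemma sq_nth: "fps_nth (sq f) n = (if even n then fps_nth f (n div 2) else 0)"
proof -
  have "fps_nth (sq f) n = (\<Sum>i=0..n. fps_nth f i * fps_nth ((fps_X ^ 2) ^ i) n)"
    unfolding sq_def by (rule fps_compose_nth)
  also have "\<dots> = (\<Sum>i=0..n. if i = n div 2 \<and> even n then fps_nth f i else 0)"
    by (rule sum.cong) (auto simp: power_mult[symmetric])
  also have "\<dots> = (if even n then fps_nth f (n div 2) else 0)"
    by (cases "even n") (simp_all add: sum.delta')
  finally show ?thesis .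
qed

lemma X2_0: "fps_nth ((fps_X::int fps) ^ 2) 0 = 0" by simp

lemma sq_mult: "sq (a * b) = sq a * sq b"
  unfolding sq_def by (rule fps_compose_mult_distrib[OF X2_0])
lemma sq_add: "sq (a + b) = sq a + sq b"
  unfolding sq_def by (rule fps_compose_add_distrib)
lemma sq_1: "sq 1 = 1" unfolding sq_def by simp
lemma sq_num: "sq (numeral k) = numeral k" unfolding sq_def by simp
lemma sq_X: "sq fps_X = fps_X ^ 2" unfolding sq_def by (rule fps_X_fps_compose_startby0[OF X2_0])

lemma split_even: "fps_nth (sq a + fps_X * sq b) (2 * k) = fps_nth a k"
  by (cases k) (simp_all add: sq_nth)
lemma split_odd: "fps_nth (sq a + fps_X * sq b) (2 * k + 1) = fps_nth b k"
  by (simp add: sq_nth)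

lemma split_uniq:
  assumes "sq a + fps_X * sq b = sq a' + fps_X * sq b'"
  shows "a = a' \<and> b = b'"
proof
  show "a = a'"
  proof (rule fps_ext)
    fix k show "fps_nth a k = fps_nth a' k" using split_even[of a b k] split_even[of a' b' k] assms by simp
  qed
  show "b = b'"
  proof (rule fps_ext)
    fix k show "fps_nth b k = fps_nth b' k" using split_odd[of a b k] split_odd[of a' b' k] assms by simp
  qed
qed

definition Ev :: "int fps" where "Ev = Abs_fps (\<lambda>k. fps_nth cf (2 * k))"
definition Od :: "int fps" where "Od = Abs_fps (\<lambda>k. fps_nth cf (2 * k + 1))"

lemma cf_split: "cf = sq Ev + fps_X * sq Od"
proof (rule fps_ext)
  fix n
  show "fps_nth cf n = fps_nth (sq Ev + fps_X * sq Od) n"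
  proof (cases "even n")
    case True
    then obtain k where k: "n = 2 * k" by blast
    show ?thesis unfolding k split_even by (simp add: Ev_def)
  next
    case False
    then obtain k where k: "n = 2 * k + 1" using oddE by blast
    show ?thesis unfolding k split_odd by (simp add: Od_def)
  qed
qed

lemma EvOd:
  "Ev = 1 + 2 * fps_X * Ev * Od \<and> Od = Ev * Ev + fps_X * Od * Od"
proof (rule split_uniq)
  have "sq Ev + fps_X * sq Od = 1 + fps_X * ((sq Ev + fps_X * sq Od) * (sq Ev + fps_X * sq Od))"
    using cf_eq unfolding cf_split[symmetric] .
  also have "\<dots> = (1 + 2 * fps_X^2 * sq Ev * sq Od) + fps_X * (sq Ev * sq Ev + fps_X^2 * sq Od * sq Od)"
    by (simp add: algebra_simps power2_eq_square)
  also have "\<dots> = sq (1 + 2 * fps_X * Ev * Od) + fps_X * sq (Ev * Ev + fps_X * Od * Od)"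
    by (simp add: sq_mult sq_add sq_1 sq_num sq_X)
  finally show "sq Ev + fps_X * sq Od = sq (1 + 2 * fps_X * Ev * Od) + fps_X * sq (Ev * Ev + fps_X * Od * Od)" .
qed

definition Af :: "int fps" where "Af = cf oo (fps_const 4 * fps_X)"

lemma c4_0: "fps_nth (fps_const 4 * (fps_X::int fps)) 0 = 0" by simp

lemma Af_nth: "fps_nth Af n = 4 ^ n * fps_nth cf n"
proof -
  have "fps_nth Af n = (\<Sum>i=0..n. fps_nth cf i * fps_nth ((fps_const 4 * fps_X) ^ i) n)"
    unfolding Af_def by (rule fps_compose_nth)
  also have "\<dots> = (\<Sum>i=0..n. if i = n then 4 ^ n * fps_nth cf i else 0)"
  proof (rule sum.cong)
    fix i assume "i \<in> {0..n}"
    have p: "(fps_const 4 * fps_X) ^ i = fps_const (4 ^ i) * (fps_X::int fps) ^ i"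
      by (simp only: power_mult_distrib fps_const_power)
    show "fps_nth cf i * fps_nth ((fps_const 4 * fps_X) ^ i) n = (if i = n then 4 ^ n * fps_nth cf i else 0)"
      unfolding p fps_mult_left_const_nth fps_X_power_nth by simp
  qed simp
  also have "\<dots> = 4 ^ n * fps_nth cf n"
    by (simp add: sum.delta')
  finally show ?thesis .
qed

lemma Af_eq: "Af = 1 + (fps_const 4 * fps_X) * (Af * Af)"
proof -
  have "Af = (1 + fps_X * (cf * cf)) oo (fps_const 4 * fps_X)"
    unfolding Af_def by (subst cf_eq[symmetric]) (rule refl)
  also have "\<dots> = 1 + (fps_const 4 * fps_X) * (Af * Af)"
    unfolding Af_def
    by (simp add: fps_compose_add_distrib fps_compose_mult_distrib[OF c4_0])
  finally show ?thesis .
qed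

lemma quad_uniq:
  fixes F G c :: "int fps"
  assumes c0: "fps_nth c 0 = 0" and F: "F = 1 + c * (F * F)" and G: "G = 1 + c * (G * G)"
  shows "F = G"
proof -
  have "(F - G) * (1 - c * (F + G)) = 0"
  proof -
    have "(F - G) * (1 - c * (F + G)) = F - G - (c * (F*F) - c * (G*G))"
      by (simp add: algebra_simps)
    also have "\<dots> = (F - c * (F*F)) - (G - c * (G*G))" by (simp add: algebra_simps)
    also have "F - c * (F*F) = 1"
      by (rule HOL.trans[OF arg_cong[where f="\<lambda>x. x - c*(F*F)", OF F]]) simp
    also have "G - c * (G*G) = 1"
      by (rule HOL.trans[OF arg_cong[where f="\<lambda>x. x - c*(G*G)", OF G]]) simp
    finally show ?thesis by simp
  qed
  moreover have "1 - c * (F + G) \<noteq> 0"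
  proof
    assume "1 - c * (F + G) = 0"
    then have "fps_nth (1 - c * (F + G)) 0 = 0" by simp
    then show False using c0 by simp
  qed
  ultimately show ?thesis by (metis mult_eq_0_iff right_minus_eq)
qed

lemma Ev_sq: "Ev * Ev = 1 + (fps_const 4 * fps_X) * ((Ev * Ev) * (Ev * Ev))"
proof -
  define u where "u = fps_X * Od"
  define w where "w = 1 - 2 * u"
  have h1: "Ev * w = 1" using EvOd unfolding w_def u_def
    by (metis (no_types, lifting) add_diff_cancel_left' diff_diff_eq2 mult.assoc mult.commute right_diff_distrib' mult.right_neutral)
  have h2: "fps_X * (Ev * Ev) = u - u * u"
  proof -
    have h: "fps_X * Od = fps_X * (Ev * Ev) + fps_X * (fps_X * Od * Od)" using EvOd
      by (metis distrib_left)
    have "fps_X * Od - fps_X * (fps_X * Od * Od) = fps_X * (Ev * Ev)"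
      using arg_cong[OF h, of "\<lambda>x. x - fps_X * (fps_X * Od * Od)"] by simp
    moreover have "u - u * u = fps_X * Od - fps_X * (fps_X * Od * Od)"
      unfolding u_def by (simp add: algebra_simps)
    ultimately show ?thesis by simp
  qed
  have "(Ev * Ev - 1 - (fps_const 4 * fps_X) * ((Ev * Ev) * (Ev * Ev))) * (w * w)
      = (Ev * w) * (Ev * w) - w * w - 4 * (fps_X * (Ev * Ev)) * ((Ev * w) * (Ev * w))"
    by (simp add: algebra_simps flip: numeral_fps_const)
  also have "\<dots> = 1 - w * w - 4 * (u - u * u)" unfolding h1 h2 by simp
  also have "\<dots> = 0" unfolding w_def by (simp add: algebra_simps)
  finally have z: "(Ev * Ev - 1 - (fps_const 4 * fps_X) * ((Ev * Ev) * (Ev * Ev))) * (w * w) = 0" .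
  have "fps_nth w 0 = 1" unfolding w_def u_def by simp
  then have "w * w \<noteq> 0" by (metis fps_mult_nth_0 fps_nonzero_nth mult_1 one_neq_zero)
  with z have d: "Ev * Ev - 1 - (fps_const 4 * fps_X) * ((Ev * Ev) * (Ev * Ev)) = 0" by simp
  show ?thesis using d by (metis diff_diff_eq eq_iff_diff_eq_0)
qed

lemma Af_Ev: "Af = Ev * Ev"
  using quad_uniq[OF c4_0 Af_eq Ev_sq] .

lemma key: "Af - Ev = fps_const 2 * (fps_X * (Af * Od))"
proof -
  have e: "Ev - 1 = 2 * fps_X * Ev * Od" using EvOd by (metis add_diff_cancel_left')
  have "Ev * Ev - Ev = Ev * (Ev - 1)" by (simp add: algebra_simps)
  also have "\<dots> = Ev * (2 * fps_X * Ev * Od)" by (simp only: e)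
  also have "\<dots> = fps_const 2 * (fps_X * (Ev * Ev * Od))"
    by (simp add: algebra_simps flip: numeral_fps_const)
  finally show ?thesis unfolding Af_Ev .
qed

lemma key_nth: "4 ^ (m+1) * int (catalan (m+1)) - int (catalan (2*m+2))
   = 2 * (\<Sum>j=0..m. 4 ^ j * int (catalan j) * int (catalan (2*(m-j)+1)))"
proof -
  have "fps_nth (Af - Ev) (Suc m) = fps_nth (fps_const 2 * (fps_X * (Af * Od))) (Suc m)"
    using key by simp
  also have "\<dots> = 2 * fps_nth (Af * Od) m" by simp
  also have "fps_nth (Af * Od) m = (\<Sum>j=0..m. 4 ^ j * int (catalan j) * int (catalan (2*(m-j)+1)))"
    unfolding fps_mult_nth by (rule sum.cong) (simp_all add: Af_nth Od_def cf_nth)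
  also have "fps_nth (Af - Ev) (Suc m) = 4 ^ (m+1) * int (catalan (m+1)) - int (catalan (2*m+2))"
    by (simp add: Af_nth Ev_def cf_nth)
  finally show ?thesis by simp
qed

theorem lemma3:
  fixes n :: nat
  assumes "n \<ge> 2"
  shows "(\<Sum>i = 1..n - 1. (2::int) ^ (2 * i - 1) * int (catalan (i - 1)) * int (catalan (2 * n - 1 - 2 * i)))
         = 4 ^ (n - 1) * int (catalan (n - 1)) - int (catalan (2 * n - 2))"
proof -
  obtain m where n: "n = m + 2" using assms by (metis add.commute le_Suc_ex)
  define f where "f i = (2::int) ^ (2 * i - 1) * int (catalan (i - 1)) * int (catalan (2 * n - 1 - 2 * i))" for i
  have "(\<Sum>i = 1..n - 1. f i) = (\<Sum>i = Suc 0..Suc m. f i)" using n by simp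
  also have "\<dots> = (\<Sum>j = 0..m. f (Suc j))" by (rule sum.shift_bounds_cl_Suc_ivl)
  also have "\<dots> = (\<Sum>j = 0..m. 2 * (4 ^ j * int (catalan j) * int (catalan (2*(m-j)+1))))"
  proof (rule sum.cong)
    fix j assume j: "j \<in> {0..m}"
    have i1: "2 * n - 1 - 2 * Suc j = 2*(m-j)+1" using j n by auto
    have i2: "(2::int) ^ (2 * Suc j - 1) = 2 * 4 ^ j"
      by (simp add: power_mult)
    show "f (Suc j) = 2 * (4 ^ j * int (catalan j) * int (catalan (2*(m-j)+1)))"
      unfolding f_def i1 i2 by simp
  qed simp
  also have "\<dots> = 2 * (\<Sum>j = 0..m. 4 ^ j * int (catalan j) * int (catalan (2*(m-j)+1)))"
    by (simp add: sum_distrib_left)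
  also have "\<dots> = 4 ^ (m+1) * int (catalan (m+1)) - int (catalan (2*m+2))"
    using key_nth[of m] by simp
  also have "\<dots> = 4 ^ (n - 1) * int (catalan (n - 1)) - int (catalan (2 * n - 2))"
    using n by simp
  finally show ?thesis unfolding f_def .
qed

end
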